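(* Let $X$ be a space and $Y$ a preopen (e.g., dense) subspace of $X$ which is an E-space. Then $Y$ is $F_{\aleph_0}$-embedded in $X$. In particular, every metrizable dense subspace of $X$ is $F_{\aleph_0}$-embedded in $X$.
   Context: "Space" means topological $T_0$-space. $Y$ is preopen in $X$ if $Y\subseteq\mathrm{int}_X(\mathrm{cl}_X(Y))$. A zero-set (cozero-set) of $X$ is $f^{-1}(0)$ (resp. its complement) for a continuous $f:X\to[0,1]$. A U-representation of $V\subseteq X$ is a sequence $(U_n(V))_{n\in\mathbb{N}}$ with $V=\bigcup_n U_n(V)$, $U_n(V)\subseteq U_{n+1}(V)$, $U_{2n-1}(V)$ a zero-set, $U_{2n}(V)$ a cozero-set. A family $\alpha$ is an almost subbase of $X$ if U-representations of its members can be chosen so that $\alpha\cup\{X\setminus U_{2n-1}(V):V\in\alpha,n\in\mathbb{N}\}$ is a subbase of $X$. A family is strongly point-finite if every countably infinite subfamily contains a finite subfamily with empty intersection; $\sigma$-strongly point-finite means a countable union of such families. An E-space is a space with a $\sigma$-strongly point-finite almost subbase. A family $\mathcal{U}$ F-separates $S\subseteq X$ if for distinct $x,y\in S$ some $U\in\mathcal{U}$ satisfies $x\in U$, $y\notin\mathrm{cl}_X(U)$, or vice versa. $Y$ is $F_{\aleph_0}$-embedded in $X$ if some family of open subsets of $X$ that is a countable union of point-finite families F-separates $Y$. *)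

theory Defs
  imports "HOL-Analysis.Analysis"
begin

definition zero_set_in :: "'a topology \<Rightarrow> 'a set \<Rightarrow> bool" where
  "zero_set_in X Z \<longleftrightarrow> (\<exists>f. continuous_map X euclideanreal f \<and> f ` topspace X \<subseteq> {0..1}
      \<and> Z = {x \<in> topspace X. f x = 0})"

definition cozero_set_in :: "'a topology \<Rightarrow> 'a set \<Rightarrow> bool" where
  "cozero_set_in X C \<longleftrightarrow> (\<exists>Z. zero_set_in X Z \<and> C = topspace X - Z)"

text \<open>U-representation (U_n)_{n \<ge> 1} of V; index 0 of the function is unused.\<close>
definition U_representation :: "'a topology \<Rightarrow> 'a set \<Rightarrow> (nat \<Rightarrow> 'a set) \<Rightarrow> bool" where
  "U_representation X V U \<longleftrightarrow>
     V = (\<Union>n\<in>{1..}. U n) \<and>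
     (\<forall>n\<ge>1. U n \<subseteq> U (Suc n)) \<and>
     (\<forall>n\<ge>1. zero_set_in X (U (2*n - 1))) \<and>
     (\<forall>n\<ge>1. cozero_set_in X (U (2*n)))"

text \<open>Subbase: the topology of X is generated by S together with the empty intersection X.\<close>
definition subbase_of :: "'a topology \<Rightarrow> 'a set set \<Rightarrow> bool" where
  "subbase_of X S \<longleftrightarrow> S \<subseteq> Pow (topspace X) \<and> X = topology_generated_by (insert (topspace X) S)"

definition almost_subbase :: "'a topology \<Rightarrow> 'a set set \<Rightarrow> bool" where
  "almost_subbase X \<alpha> \<longleftrightarrow>
     (\<exists>R :: 'a set \<Rightarrow> nat \<Rightarrow> 'a set.
        (\<forall>V\<in>\<alpha>. U_representation X V (R V)) \<and>
        subbase_of X (\<alpha> \<union> {topspace X - R V (2*n - 1) | V n. V \<in> \<alpha> \<and> n \<ge> 1}))"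

definition strongly_point_finite :: "'a set set \<Rightarrow> bool" where
  "strongly_point_finite \<F> \<longleftrightarrow>
     (\<forall>\<C>\<subseteq>\<F>. countable \<C> \<and> infinite \<C> \<longrightarrow> (\<exists>\<D>\<subseteq>\<C>. finite \<D> \<and> \<Inter>\<D> = {}))"

definition sigma_strongly_point_finite :: "'a set set \<Rightarrow> bool" where
  "sigma_strongly_point_finite \<F> \<longleftrightarrow>
     (\<exists>G :: nat \<Rightarrow> 'a set set. \<F> = (\<Union>n. G n) \<and> (\<forall>n. strongly_point_finite (G n)))"

definition E_space :: "'a topology \<Rightarrow> bool" where
  "E_space X \<longleftrightarrow> t0_space X \<and> (\<exists>\<alpha>. almost_subbase X \<alpha> \<and> sigma_strongly_point_finite \<alpha>)"

definition preopen_in :: "'a topology \<Rightarrow> 'a set \<Rightarrow> bool" where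
  "preopen_in X Y \<longleftrightarrow> Y \<subseteq> topspace X \<and> Y \<subseteq> X interior_of (X closure_of Y)"

definition F_separates :: "'a topology \<Rightarrow> 'a set set \<Rightarrow> 'a set \<Rightarrow> bool" where
  "F_separates X \<U> S \<longleftrightarrow>
     (\<forall>x\<in>S. \<forall>y\<in>S. x \<noteq> y \<longrightarrow>
        (\<exists>U\<in>\<U>. (x \<in> U \<and> y \<notin> X closure_of U) \<or> (y \<in> U \<and> x \<notin> X closure_of U)))"

definition point_finite_in :: "'a topology \<Rightarrow> 'a set set \<Rightarrow> bool" where
  "point_finite_in X \<F> \<longleftrightarrow> (\<forall>x\<in>topspace X. finite {U\<in>\<F>. x \<in> U})"

definition F_aleph0_embedded :: "'a topology \<Rightarrow> 'a set \<Rightarrow> bool" where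
  "F_aleph0_embedded X Y \<longleftrightarrow>
     (\<exists>\<U>. (\<forall>U\<in>\<U>. openin X U) \<and>
          (\<exists>G :: nat \<Rightarrow> 'a set set. \<U> = (\<Union>n. G n) \<and> (\<forall>n. point_finite_in X (G n))) \<and>
          F_separates X \<U> Y)"

end

theory Submission
  imports Defs "HOL-Library.Countable"
begin


lemma extend_lemma:
  fixes X :: "'a topology" and Y :: "'a set" and G :: "'i::countable \<Rightarrow> 'a set set"
  assumes Ysub: "Y \<subseteq> topspace X" and pre: "Y \<subseteq> X interior_of (X closure_of Y)"
    and opn: "\<And>i W. W \<in> G i \<Longrightarrow> openin (subtopology X Y) W"
    and spf: "\<And>i. strongly_point_finite (G i)"
    and sep: "\<And>x y. x \<in> Y \<Longrightarrow> y \<in> Y \<Longrightarrow> x \<noteq> y \<Longrightarrow> (\<exists>i. \<exists>W\<in>G i.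
          (x \<in> W \<and> y \<notin> subtopology X Y closure_of W) \<or> (y \<in> W \<and> x \<notin> subtopology X Y closure_of W))"
  shows "F_aleph0_embedded X Y"
proof -
  define Op where "Op = X interior_of (X closure_of Y)"
  define Ex where "Ex W = Op - X closure_of (Y - W)" for W
  have e1: "openin X (Ex W)" for W
    unfolding Ex_def Op_def by (intro openin_diff) auto
  have e2: "W \<subseteq> Ex W" if "openin (subtopology X Y) W" for W
  proof
    fix x assume x: "x \<in> W"
    from that obtain T where T: "openin X T" "W = T \<inter> Y" by (auto simp: openin_subtopology)
    have "x \<notin> X closure_of (Y - W)"
      using x T unfolding in_closure_of by auto
    moreover have "x \<in> Op" using x T pre Op_def by auto
    ultimately show "x \<in> Ex W" by (simp add: Ex_def)
  qed
  have e3: "Ex W \<inter> Y \<subseteq> W" for W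
    proof -
    have "Y - W \<subseteq> X closure_of (Y - W)" using Ysub by (intro closure_of_subset) auto
    then show ?thesis unfolding Ex_def by blast
  qed
  have e4: "N \<inter> Y \<noteq> {}" if "openin X N" "z \<in> N" "N \<subseteq> Op" for N z
  proof -
    have "Op \<subseteq> X closure_of Y" unfolding Op_def by (rule interior_of_subset)
    then have "z \<in> X closure_of Y" using that by blast
    then show ?thesis using that unfolding in_closure_of by auto
  qed
  have exO: "Ex W \<subseteq> Op" for W by (auto simp: Ex_def)
  have e5: "y \<in> subtopology X Y closure_of W" if hy: "y \<in> Y" "y \<in> X closure_of (Ex W)" "W \<subseteq> Y" for y W
  proof -
    have "y \<in> X closure_of W"
      unfolding in_closure_of
    proof (intro conjI allI impI)
      show "y \<in> topspace X" using hy Ysub by auto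
      fix T assume T: "y \<in> T \<and> openin X T"
      then obtain z where z: "z \<in> Ex W" "z \<in> T" using hy(2) unfolding in_closure_of by blast
      have "(T \<inter> Ex W) \<inter> Y \<noteq> {}"
        using e4[of "T \<inter> Ex W" z] T z e1 exO by auto
      then show "\<exists>y. y \<in> W \<and> y \<in> T" using e3 by blast
    qed
    moreover have "Y \<inter> W = W" using hy(3) by blast
    ultimately show ?thesis using hy(1) by (simp add: closure_of_subtopology)
  qed
  have eY: "Ex W \<inter> Y = W" if "openin (subtopology X Y) W" for W
  proof -
    have "W \<subseteq> Y" using openin_subset[OF that] by auto
    then show ?thesis using e2[OF that] e3[of W] by blast
  qed
  have inj: "inj_on Ex (G i)" for i
  proof (rule inj_onI)
    fix W1 W2 assume w: "W1 \<in> G i" "W2 \<in> G i" "Ex W1 = Ex W2"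
    have "W1 = Ex W1 \<inter> Y" by (rule eY[OF opn[OF w(1)], symmetric])
    also have "\<dots> = Ex W2 \<inter> Y" using w(3) by (rule arg_cong)
    also have "\<dots> = W2" by (rule eY[OF opn[OF w(2)]])
    finally show "W1 = W2" .
  qed
  have pf: "point_finite_in X (Ex ` G i)" for i
    unfolding point_finite_in_def
  proof (intro ballI, rule ccontr)
    fix z assume z: "z \<in> topspace X" and inf: "infinite {U \<in> Ex ` G i. z \<in> U}"
    obtain f :: "nat \<Rightarrow> 'a set" where f: "inj f" "range f \<subseteq> {U \<in> Ex ` G i. z \<in> U}"
      using infinite_countable_subset[OF inf] by blast
    define g where "g n = inv_into (G i) Ex (f n)" for n
    have fn: "f n \<in> Ex ` G i" for n using f(2) by blast
    have g1: "g n \<in> G i" for n unfolding g_def using fn[of n] by (rule inv_into_into)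
    have g2: "Ex (g n) = f n" for n unfolding g_def using fn[of n] by (rule f_inv_into_f)
    have "inj g"
    proof (rule injI)
      fix a b assume "g a = g b"
      then have "f a = f b" using g2 by metis
      then show "a = b" using f(1) by (simp add: inj_eq)
    qed
    then have "infinite (range g)" by (simp add: range_inj_infinite)
    moreover have "range g \<subseteq> G i" using g1 by blast
    moreover have "countable (range g)" by simp
    moreover have "\<forall>C\<subseteq>G i. countable C \<and> infinite C \<longrightarrow> (\<exists>D\<subseteq>C. finite D \<and> \<Inter>D = {})"
      using spf[of i] unfolding strongly_point_finite_def .
    ultimately obtain D where D: "D \<subseteq> range g" "finite D" "\<Inter>D = {}"
      by meson
    have "D \<noteq> {}" using D by auto
    define N where "N = Op \<inter> \<Inter>(Ex ` D)"
    have "openin X N" unfolding N_def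
    proof (rule openin_Int)
      show "openin X Op" unfolding Op_def by simp
      show "openin X (\<Inter>(Ex ` D))"
        by (rule openin_Inter) (use D \<open>D \<noteq> {}\<close> e1 in auto)
    qed
    moreover have zD: "z \<in> Ex W" if wD: "W \<in> D" for W
    proof -
      obtain n where "W = g n" using wD D(1) by blast
      then show ?thesis using g2[of n] f(2) by blast
    qed
    have "z \<in> Op"
    proof -
      obtain W where "W \<in> D" using \<open>D \<noteq> {}\<close> by blast
      then show ?thesis using zD exO by blast
    qed
    then have "z \<in> N" unfolding N_def using zD by blast
    moreover have "N \<subseteq> Op" unfolding N_def by blast
    ultimately have "N \<inter> Y \<noteq> {}" by (rule e4)
    then obtain p where p: "p \<in> N" "p \<in> Y" by blast
    have "p \<in> W" if "W \<in> D" for W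
      using p that e3[of W] unfolding N_def by blast
    then have "p \<in> \<Inter>D" by blast
    then show False using D by auto
  qed
  show ?thesis
    unfolding F_aleph0_embedded_def
  proof (intro exI conjI)
    show "\<forall>U\<in>(\<Union>i. Ex ` G i). openin X U" using e1 by auto
    show "(\<Union>i. Ex ` G i) = (\<Union>n. Ex ` G (from_nat n))"
    proof (rule equalityI)
      show "(\<Union>i. Ex ` G i) \<subseteq> (\<Union>n. Ex ` G (from_nat n))"
      proof
        fix U assume "U \<in> (\<Union>i. Ex ` G i)"
        then obtain i where "U \<in> Ex ` G i" by blast
        then have "U \<in> Ex ` G (from_nat (to_nat i))" by simp
        then show "U \<in> (\<Union>n. Ex ` G (from_nat n))" by blast
      qed
    qed blast
    show "\<forall>n. point_finite_in X (Ex ` G (from_nat n))" using pf by auto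
    show "F_separates X (\<Union>i. Ex ` G i) Y"
      unfolding F_separates_def
    proof (intro ballI impI)
      fix x y assume xy: "x \<in> Y" "y \<in> Y" "x \<noteq> y"
      then obtain i W where W: "W \<in> G i"
        "(x \<in> W \<and> y \<notin> subtopology X Y closure_of W) \<or> (y \<in> W \<and> x \<notin> subtopology X Y closure_of W)"
        using sep by blast
      have WY: "W \<subseteq> Y" using openin_subset[OF opn[OF W(1)]] Ysub by auto
      have "(x \<in> Ex W \<and> y \<notin> X closure_of Ex W) \<or> (y \<in> Ex W \<and> x \<notin> X closure_of Ex W)"
        using W(2) e5[OF _ _ WY] xy e2[OF opn[OF W(1)]] by blast
      then show "\<exists>U\<in>(\<Union>i. Ex ` G i). (x \<in> U \<and> y \<notin> X closure_of U) \<or> (y \<in> U \<and> x \<notin> X closure_of U)"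
        using W(1) by blast
    qed
  qed
qed



lemma gen_sep:
  assumes "generate_topology_on S U" "x \<in> U" "y \<notin> U"
  shows "\<exists>s\<in>S. x \<in> s \<and> y \<notin> s"
  using assms
proof (induction rule: generate_topology_on.induct)
  case Empty then show ?case by simp
next
  case (Int a b) then show ?case by blast
next
  case (UN K) then show ?case by blast
next
  case (Basis s) then show ?case by blast
qed

lemma Urep_mono:
  assumes "U_representation X V U" "1 \<le> n" "n \<le> m"
  shows "U n \<subseteq> U m"
  using assms(3)
proof (induction m rule: dec_induct)
  case base then show ?case by simp
next
  case (step m)
  have "U m \<subseteq> U (Suc m)" using assms(1,2) step(1) unfolding U_representation_def by auto
  then show ?case using step(3) by blast
qed

lemma Urep_sub:
  assumes "U_representation X V U" "1 \<le> n"
  shows "U n \<subseteq> V"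
  using assms unfolding U_representation_def by auto

lemma spf_image:
  assumes "strongly_point_finite A" "\<And>a. a \<in> A \<Longrightarrow> \<phi> a \<subseteq> a"
  shows "strongly_point_finite (\<phi> ` A)"
  unfolding strongly_point_finite_def
proof (intro allI impI)
  fix C assume C: "C \<subseteq> \<phi> ` A" "countable C \<and> infinite C"
  define \<psi> where "\<psi> = inv_into A \<phi>"
  have psi: "\<psi> c \<in> A" "\<phi> (\<psi> c) = c" if "c \<in> C" for c
  proof -
    have "c \<in> \<phi> ` A" using C(1) that by blast
    then show "\<psi> c \<in> A" "\<phi> (\<psi> c) = c" unfolding \<psi>_def
      by (rule inv_into_into, rule f_inv_into_f)
  qed
  have "inj_on \<psi> C" by (metis psi(2) inj_onI)
  then have "infinite (\<psi> ` C)" using C(2) finite_imageD by blast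
  moreover have "countable (\<psi> ` C)" using C(2) by simp
  moreover have "\<psi> ` C \<subseteq> A" using psi by blast
  ultimately obtain D where D: "D \<subseteq> \<psi> ` C" "finite D" "\<Inter>D = {}"
    using assms(1) unfolding strongly_point_finite_def by meson
  show "\<exists>D\<subseteq>C. finite D \<and> \<Inter>D = {}"
  proof (intro exI conjI)
    show "\<phi> ` D \<subseteq> C" using D(1) psi by auto
    show "finite (\<phi> ` D)" using D(2) by simp
    have "\<Inter>(\<phi> ` D) \<subseteq> \<Inter>D" using D(1) assms(2) psi by blast
    then show "\<Inter>(\<phi> ` D) = {}" using D(3) by blast
  qed
qed



lemma E_space_sep:
  fixes X :: "'a topology" and Y :: "'a set"
  assumes Ysub: "Y \<subseteq> topspace X" and E: "E_space (subtopology X Y)"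
  shows "\<exists>G :: nat \<times> nat \<times> nat \<Rightarrow> 'a set set.
    (\<forall>i. \<forall>W\<in>G i. openin (subtopology X Y) W) \<and> (\<forall>i. strongly_point_finite (G i)) \<and>
    (\<forall>x y. x \<in> Y \<longrightarrow> y \<in> Y \<longrightarrow> x \<noteq> y \<longrightarrow> (\<exists>i. \<exists>W\<in>G i.
          (x \<in> W \<and> y \<notin> subtopology X Y closure_of W) \<or> (y \<in> W \<and> x \<notin> subtopology X Y closure_of W)))"
proof -
  define T where "T = subtopology X Y"
  have tT: "topspace T = Y" using Ysub unfolding T_def by auto
  obtain \<alpha> where t0: "t0_space T" and as: "almost_subbase T \<alpha>" and ss: "sigma_strongly_point_finite \<alpha>"
    using E unfolding E_space_def T_def by blast
  obtain R where Rrep: "\<And>V. V \<in> \<alpha> \<Longrightarrow> U_representation T V (R V)"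
    and sb: "subbase_of T (\<alpha> \<union> {topspace T - R V (2*n - 1) | V n. V \<in> \<alpha> \<and> n \<ge> 1})"
    using as unfolding almost_subbase_def by blast
  obtain GA :: "nat \<Rightarrow> 'a set set" where GA: "\<alpha> = (\<Union>n. GA n)" "\<And>n. strongly_point_finite (GA n)"
    using ss unfolding sigma_strongly_point_finite_def by blast
  define Q where "Q V n p \<longleftrightarrow> continuous_map T euclideanreal (fst p) \<and> fst p ` Y \<subseteq> {0..1}
      \<and> R V (2*n - 1) = {x \<in> Y. fst p x = 0} \<and> continuous_map T euclideanreal (snd p)
      \<and> R V (2*n) = {x \<in> Y. snd p x \<noteq> 0}" for V n and p :: "('a \<Rightarrow> real) \<times> ('a \<Rightarrow> real)"
  have exQ: "\<exists>p. Q V n p" if "V \<in> \<alpha>" "n \<ge> 1" for V n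
  proof -
    have "zero_set_in T (R V (2*n - 1))" "cozero_set_in T (R V (2*n))"
      using Rrep[OF that(1)] that(2) unfolding U_representation_def by auto
    then obtain f g Z where f: "continuous_map T euclideanreal f" "f ` topspace T \<subseteq> {0..1}"
        "R V (2*n - 1) = {x \<in> topspace T. f x = 0}"
      and g: "continuous_map T euclideanreal g" "Z = {x \<in> topspace T. g x = 0}" "R V (2*n) = topspace T - Z"
      unfolding zero_set_in_def cozero_set_in_def by blast
    have "Q V n (f, g)" unfolding Q_def using f g tT by auto
    then show ?thesis by blast
  qed
  define ff where "ff V n = (SOME p. Q V n p)" for V n
  have Qff: "Q V n (ff V n)" if "V \<in> \<alpha>" "n \<ge> 1" for V n
    unfolding ff_def using exQ[OF that] by (rule someI_ex)
  define W where "W V n j = {z \<in> Y. fst (ff V n) z < inverse (real (Suc j)) \<and> snd (ff V n) z \<noteq> 0}" for V n j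
  define G where "G ijk = (case ijk of (k, n, j) \<Rightarrow> (\<lambda>V. W V (Suc n) j) ` GA k)" for ijk
  have GAsub: "GA k \<subseteq> \<alpha>" for k using GA(1) by blast
  have Wopen: "openin T (W V n j)" if "V \<in> \<alpha>" "n \<ge> 1" for V n j
  proof -
    have q: "continuous_map T euclideanreal (fst (ff V n))" "continuous_map T euclideanreal (snd (ff V n))"
      using Qff[OF that] unfolding Q_def by auto
    have "openin T {x \<in> topspace T. fst (ff V n) x \<in> {..<inverse (real (Suc j))}}"
      by (rule openin_continuous_map_preimage[OF q(1)]) simp
    moreover have "openin T {x \<in> topspace T. snd (ff V n) x \<in> -{0}}"
      by (rule openin_continuous_map_preimage[OF q(2)]) (simp add: open_Compl)
    ultimately have "openin T ({x \<in> topspace T. fst (ff V n) x \<in> {..<inverse (real (Suc j))}}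
        \<inter> {x \<in> topspace T. snd (ff V n) x \<in> -{0}})" by (rule openin_Int)
    moreover have "({x \<in> topspace T. fst (ff V n) x \<in> {..<inverse (real (Suc j))}}
        \<inter> {x \<in> topspace T. snd (ff V n) x \<in> -{0}}) = W V n j"
      unfolding W_def tT by auto
    ultimately show ?thesis by simp
  qed
  have WsubR: "W V n j \<subseteq> R V (2*n)" if "V \<in> \<alpha>" "n \<ge> 1" for V n j
    using Qff[OF that] unfolding Q_def W_def by auto
  have Wsub: "W V n j \<subseteq> V" if "V \<in> \<alpha>" "n \<ge> 1" for V n j
    using WsubR[OF that] Urep_sub[OF Rrep[OF that(1)], of "2*n"] that(2) by auto
  have claim: "\<exists>i. \<exists>U\<in>G i. (a \<in> U \<and> b \<notin> T closure_of U) \<or> (b \<in> U \<and> a \<notin> T closure_of U)"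
    if ab: "a \<in> Y" "b \<in> Y" "s \<in> insert (topspace T) (\<alpha> \<union> {topspace T - R V (2*n - 1) | V n. V \<in> \<alpha> \<and> n \<ge> 1})"
       "a \<in> s" "b \<notin> s" for a b s
  proof -
    have "s \<noteq> topspace T" using ab tT by auto
    then consider "s \<in> \<alpha>" | V n where "V \<in> \<alpha>" "n \<ge> 1" "s = Y - R V (2*n - 1)"
      using ab(3) tT by blast
    then show ?thesis
    proof cases
      case 1
      have "a \<in> (\<Union>n\<in>{1..}. R s n)" using Rrep[OF 1] ab(4) unfolding U_representation_def by blast
      then obtain m where m: "m \<ge> 1" "a \<in> R s m" by auto
      have "R s m \<subseteq> R s (2*m - 1)" by (rule Urep_mono[OF Rrep[OF 1] m(1)]) simp
      then have a1: "a \<in> R s (2*m - 1)" using m by blast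
      have "R s (2*m - 1) \<subseteq> R s (2*m)" by (rule Urep_mono[OF Rrep[OF 1]]) (use m in auto)
      then have a2: "a \<in> R s (2*m)" using a1 by blast
      have Qm: "Q s m (ff s m)" by (rule Qff[OF 1 m(1)])
      have aW: "a \<in> W s m 0" using Qm a1 a2 ab(1) unfolding Q_def W_def by auto
      obtain k where k: "s \<in> GA k" using 1 GA(1) by blast
      have WG: "W s m 0 \<in> G (k, m - 1, 0)" unfolding G_def using k m(1) by (simp add: Suc_diff_le)
      have Qm1: "Q s (Suc m) (ff s (Suc m))" by (rule Qff[OF 1]) simp
      have cl: "closedin T (R s (2*Suc m - 1))"
      proof -
        have "closedin T {x \<in> topspace T. fst (ff s (Suc m)) x \<in> {0}}"
          by (rule closedin_continuous_map_preimage) (use Qm1 in \<open>auto simp: Q_def\<close>)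
        moreover have "{x \<in> topspace T. fst (ff s (Suc m)) x \<in> {0}} = R s (2*Suc m - 1)"
          using Qm1 tT unfolding Q_def by auto
        ultimately show ?thesis by simp
      qed
      have "R s (2*m) \<subseteq> R s (2*Suc m - 1)" by (rule Urep_mono[OF Rrep[OF 1]]) (use m in auto)
      then have "W s m 0 \<subseteq> R s (2*Suc m - 1)" using WsubR[OF 1 m(1)] by blast
      then have "T closure_of W s m 0 \<subseteq> R s (2*Suc m - 1)" using cl by (rule closure_of_minimal)
      moreover have "R s (2*Suc m - 1) \<subseteq> s" by (rule Urep_sub[OF Rrep[OF 1]]) simp
      ultimately have "b \<notin> T closure_of W s m 0" using ab(5) by blast
      then show ?thesis using aW WG by blast
    next
      case 2
      note V = 2(1,2)
      have Qn: "Q V n (ff V n)" by (rule Qff[OF V])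
      define f where "f = fst (ff V n)"
      have fb: "f b = 0" using ab(2,5) Qn 2(3) unfolding Q_def f_def by auto
      have fa: "f a \<noteq> 0" using ab(1,4) Qn 2(3) unfolding Q_def f_def by auto
      moreover have "f a \<in> {0..1}" using ab(1) Qn unfolding Q_def f_def by auto
      ultimately have fapos: "f a > 0" by auto
      obtain j where j: "inverse (real (Suc j)) < f a" using reals_Archimedean[OF fapos] by blast
      have "R V (2*n - 1) \<subseteq> R V (2*n)" by (rule Urep_mono[OF Rrep[OF V(1)]]) (use V in auto)
      then have "b \<in> R V (2*n)" using ab(2,5) 2(3) by blast
      then have bW: "b \<in> W V n j" using fb ab(2) Qn unfolding W_def Q_def f_def by auto
      have cl: "closedin T {x \<in> topspace T. f x \<in> {..inverse (real (Suc j))}}"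
        by (rule closedin_continuous_map_preimage) (use Qn in \<open>auto simp: Q_def f_def\<close>)
      have "W V n j \<subseteq> {x \<in> topspace T. f x \<in> {..inverse (real (Suc j))}}"
        unfolding W_def f_def tT by auto
      then have "T closure_of W V n j \<subseteq> {x \<in> topspace T. f x \<in> {..inverse (real (Suc j))}}"
        using cl by (rule closure_of_minimal)
      then have "a \<notin> T closure_of W V n j" using j by auto
      obtain k where k: "V \<in> GA k" using V(1) GA(1) by blast
      have WG: "W V n j \<in> G (k, n - 1, j)" unfolding G_def using k V(2) by (simp add: Suc_diff_le)
      show ?thesis using WG bW \<open>a \<notin> T closure_of W V n j\<close> by blast
    qed
  qed
  show ?thesis unfolding T_def[symmetric]
  proof (intro exI[of _ G] conjI allI impI ballI)
    fix i :: "nat \<times> nat \<times> nat" and U assume "U \<in> G i"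
    then obtain k n j V where "i = (k, n, j)" "V \<in> GA k" "U = W V (Suc n) j"
      unfolding G_def by (cases i) auto
    then show "openin T U" using Wopen[of V "Suc n" j] GAsub by auto
  next
    fix i :: "nat \<times> nat \<times> nat"
    obtain k n j where i: "i = (k, n, j)" by (cases i)
    have "strongly_point_finite ((\<lambda>V. W V (Suc n) j) ` GA k)"
    proof (rule spf_image[OF GA(2)])
      fix a assume "a \<in> GA k"
      then have "a \<in> \<alpha>" using GAsub by blast
      then show "W a (Suc n) j \<subseteq> a" by (rule Wsub) simp
    qed
    then show "strongly_point_finite (G i)" unfolding G_def i by simp
  next
    fix x y assume xy: "x \<in> Y" "y \<in> Y" "x \<noteq> y"
    have "\<exists>U. openin T U \<and> (x \<notin> U \<longleftrightarrow> y \<in> U)"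
      using t0 xy tT unfolding t0_space_def by blast
    then obtain U where U: "openin T U" "x \<notin> U \<longleftrightarrow> y \<in> U" by blast
    define S where "S = insert (topspace T) (\<alpha> \<union> {topspace T - R V (2*n - 1) | V n. V \<in> \<alpha> \<and> n \<ge> 1})"
    have "T = topology_generated_by S" using sb unfolding subbase_of_def S_def by blast
    then have "openin (topology_generated_by S) U" using U(1) by simp
    then have gU: "generate_topology_on S U" by (rule openin_topology_generated_by)
    show "\<exists>i. \<exists>W\<in>G i. (x \<in> W \<and> y \<notin> T closure_of W) \<or> (y \<in> W \<and> x \<notin> T closure_of W)"
    proof (cases "x \<in> U")
      case True
      then obtain s where "s \<in> S" "x \<in> s" "y \<notin> s" using gen_sep[OF gU] U(2) by blast
      then show ?thesis using claim[of x y s] xy unfolding S_def by blast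
    next
      case False
      then obtain s where "s \<in> S" "y \<in> s" "x \<notin> s" using gen_sep[OF gU] U(2) by blast
      then have "\<exists>i. \<exists>U\<in>G i. (y \<in> U \<and> x \<notin> T closure_of U) \<or> (x \<in> U \<and> y \<notin> T closure_of U)"
        using claim[of y x s] xy unfolding S_def by blast
      then show ?thesis by blast
    qed
  qed
qed



lemma spf_disjoint:
  assumes "\<And>A B. A \<in> F \<Longrightarrow> B \<in> F \<Longrightarrow> A \<noteq> B \<Longrightarrow> A \<inter> B = {}"
  shows "strongly_point_finite F"
  unfolding strongly_point_finite_def
proof (intro allI impI)
  fix C assume C: "C \<subseteq> F" "countable C \<and> infinite C"
  have "C \<noteq> {}" using C(2) by auto
  then obtain A where A: "A \<in> C" by blast
  have "infinite (C - {A})" using C(2) by (simp add: infinite_remove)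
  then have "C - {A} \<noteq> {}" by (intro notI) simp
  then obtain B where B: "B \<in> C - {A}" by blast
  show "\<exists>D\<subseteq>C. finite D \<and> \<Inter>D = {}"
  proof (intro exI conjI)
    show "{A, B} \<subseteq> C" using A B by blast
    show "finite {A, B}" by simp
    have "A \<in> F" "B \<in> F" "A \<noteq> B" using A B C(1) by blast+
    then have "A \<inter> B = {}" by (rule assms)
    then show "\<Inter>{A, B} = {}" by simp
  qed
qed

lemma exists_wf_total: "\<exists>lt :: 'a rel. wf lt \<and> (\<forall>a b. a \<noteq> b \<longrightarrow> (a, b) \<in> lt \<or> (b, a) \<in> lt)"
proof -
  have "\<exists>r::'a rel. Well_order r \<and> Field r = UNIV" by (rule well_ordering)
  then obtain r :: "'a rel" where r1: "Well_order r" and r2: "Field r = UNIV" by (elim exE conjE)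
  have w: "wf (r - Id)" using r1 unfolding well_order_on_def by (elim conjE)
  have "total_on (Field r) r" using r1 unfolding well_order_on_def linear_order_on_def by (elim conjE)
  then have t: "total_on UNIV r" by (simp only: r2)
  show ?thesis
  proof (intro exI[of _ "r - Id"] conjI allI impI)
    show "wf (r - Id)" by (rule w)
    fix a b :: 'a assume "a \<noteq> b"
    then have "(a, b) \<in> r \<or> (b, a) \<in> r" using t unfolding total_on_def by simp
    then show "(a, b) \<in> r - Id \<or> (b, a) \<in> r - Id" using \<open>a \<noteq> b\<close> by blast
  qed
qed

lemma (in Metric_space) metric_sep:
  shows "\<exists>G :: rat \<Rightarrow> 'a set set. (\<forall>q. \<forall>W\<in>G q. openin mtopology W) \<and> (\<forall>q. strongly_point_finite (G q))
     \<and> (\<forall>x y. x \<in> M \<longrightarrow> y \<in> M \<longrightarrow> x \<noteq> y \<longrightarrow> (\<exists>q. \<exists>W\<in>G q. x \<in> W \<and> y \<notin> mtopology closure_of W))"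
proof -
  have "\<exists>lt :: 'a rel. wf lt \<and> (\<forall>a b. a \<noteq> b \<longrightarrow> (a, b) \<in> lt \<or> (b, a) \<in> lt)"
    by (rule exists_wf_total)
  then obtain lt :: "'a rel" where lt: "wf lt \<and> (\<forall>a b. a \<noteq> b \<longrightarrow> (a, b) \<in> lt \<or> (b, a) \<in> lt)"
    by (rule exE)
  have wf: "wf lt" using lt by (rule conjunct1)
  have tot: "(a, b) \<in> lt \<or> (b, a) \<in> lt" if "a \<noteq> b" for a b
    using lt that by simp
  define H where "H \<rho> a = {z \<in> M. d z a < \<rho> \<and> (\<exists>s>\<rho>. \<forall>b\<in>M. (b, a) \<in> lt \<longrightarrow> s \<le> d z b)}" for \<rho> a
  define G where "G q = (\<lambda>a. H (of_rat q) a) ` M" for q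
  have Hopen: "openin mtopology (H \<rho> a)" if "a \<in> M" for \<rho> a
    unfolding openin_mtopology
  proof (intro conjI allI impI)
    show "H \<rho> a \<subseteq> M" unfolding H_def by blast
    fix z assume "z \<in> H \<rho> a"
    then obtain s where z: "z \<in> M" "d z a < \<rho>" "s > \<rho>" "\<And>b. b \<in> M \<Longrightarrow> (b, a) \<in> lt \<Longrightarrow> s \<le> d z b"
      unfolding H_def by blast
    define \<epsilon> where "\<epsilon> = min (\<rho> - d z a) ((s - \<rho>) / 2)"
    have "\<epsilon> > 0" using z unfolding \<epsilon>_def by auto
    moreover have "mball z \<epsilon> \<subseteq> H \<rho> a"
    proof
      fix w assume "w \<in> mball z \<epsilon>"
      then have w: "w \<in> M" "d z w < \<epsilon>" by auto
      have "d w a \<le> d w z + d z a" using triangle[OF w(1) z(1) that] .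
      then have 1: "d w a < \<rho>" using w(2) commute[of w z] unfolding \<epsilon>_def by auto
      have 2: "(s + \<rho>) / 2 \<le> d w b" if "b \<in> M" "(b, a) \<in> lt" for b
      proof -
        have "d z b \<le> d z w + d w b" using triangle[OF z(1) w(1) that(1)] .
        then show ?thesis using z(4)[OF that] w(2) unfolding \<epsilon>_def by auto
      qed
      have "(s + \<rho>) / 2 > \<rho>" using z(3) by simp
      then show "w \<in> H \<rho> a" unfolding H_def using w(1) 1 2 by blast
    qed
    ultimately show "\<exists>r>0. mball z r \<subseteq> H \<rho> a" by blast
  qed
  have Hdisj: "H \<rho> a \<inter> H \<rho> b = {}" if "a \<in> M" "(a, b) \<in> lt" for \<rho> a b
  proof -
    have "z \<notin> H \<rho> a" if "z \<in> H \<rho> b" for z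
    proof -
      obtain s where "s > \<rho>" "\<And>c. c \<in> M \<Longrightarrow> (c, b) \<in> lt \<Longrightarrow> s \<le> d z c"
        using \<open>z \<in> H \<rho> b\<close> unfolding H_def by blast
      then have "d z a > \<rho>" using \<open>a \<in> M\<close> \<open>(a, b) \<in> lt\<close> by force
      then show ?thesis unfolding H_def by auto
    qed
    then show ?thesis by blast
  qed
  show ?thesis
  proof (intro exI[of _ G] conjI allI impI ballI)
    fix q W assume "W \<in> G q"
    then show "openin mtopology W" unfolding G_def using Hopen by blast
  next
    fix q
    show "strongly_point_finite (G q)"
    proof (rule spf_disjoint)
      fix A B assume "A \<in> G q" "B \<in> G q" "A \<noteq> B"
      then obtain a b where ab: "a \<in> M" "b \<in> M" "A = H (of_rat q) a" "B = H (of_rat q) b"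
        unfolding G_def by blast
      then have "a \<noteq> b" using \<open>A \<noteq> B\<close> by blast
      then consider "(a, b) \<in> lt" | "(b, a) \<in> lt" using tot by blast
      then show "A \<inter> B = {}"
      proof cases
        case 1 then show ?thesis using Hdisj[OF ab(1) 1] ab by simp
      next
        case 2 then show ?thesis using Hdisj[OF ab(2) 2] ab by blast
      qed
    qed
  next
    fix x y assume xy: "x \<in> M" "y \<in> M" "x \<noteq> y"
    define e where "e = d x y"
    have epos: "e > 0" using xy unfolding e_def by (simp add: mdist_pos_less)
    define t where "t = e / 2"
    define A where "A = {a \<in> M. d x a < t}"
    have "x \<in> A" unfolding A_def t_def using xy(1) epos by simp
    then obtain a where a: "a \<in> A" "\<And>b. (b, a) \<in> lt \<Longrightarrow> b \<notin> A"
      using wfE_min[OF wf \<open>x \<in> A\<close>] by blast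
    have aM: "a \<in> M" and dxa: "d x a < t" using a(1) unfolding A_def by auto
    have low: "t \<le> d x b" if "b \<in> M" "(b, a) \<in> lt" for b
      using a(2)[OF that(2)] that(1) unfolding A_def by auto
    obtain r where r: "r \<in> \<rat>" "d x a < r" "r < t" using Rats_dense_in_real[OF dxa] by blast
    obtain q where q: "r = of_rat q" using r(1) by (auto elim: Rats_cases)
    have xH: "x \<in> H r a" unfolding H_def using xy(1) r(2) commute[of x a] low r(3) by auto
    have "H r a \<subseteq> mcball a r" unfolding H_def using aM commute by auto
    then have "mtopology closure_of H r a \<subseteq> mcball a r" by (rule closure_of_minimal) simp
    moreover have "d a y > r"
    proof -
      have "d x y \<le> d x a + d a y" using triangle[OF xy(1) aM xy(2)] .
      then show ?thesis using dxa r(3) unfolding e_def[symmetric] t_def by auto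
    qed
    ultimately have "y \<notin> mtopology closure_of H r a" by auto
    moreover have "H r a \<in> G q" unfolding G_def q using aM by blast
    ultimately show "\<exists>q. \<exists>W\<in>G q. x \<in> W \<and> y \<notin> mtopology closure_of W" using xH by blast
  qed
qed


theorem corollary4p9:
  fixes X :: "'a topology" and Y :: "'a set"
  assumes "t0_space X"
  shows "(preopen_in X Y \<and> E_space (subtopology X Y) \<longrightarrow> F_aleph0_embedded X Y) \<and>
         (\<forall>D. D \<subseteq> topspace X \<and> X closure_of D = topspace X \<and> metrizable_space (subtopology X D)
              \<longrightarrow> F_aleph0_embedded X D)"
proof (intro conjI impI allI)
  assume h: "preopen_in X Y \<and> E_space (subtopology X Y)"
  then have p: "preopen_in X Y" and E: "E_space (subtopology X Y)" by (rule conjunct1, rule conjunct2)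
  have Ysub: "Y \<subseteq> topspace X" using p unfolding preopen_in_def by (rule conjunct1)
  have pre: "Y \<subseteq> X interior_of (X closure_of Y)" using p unfolding preopen_in_def by (rule conjunct2)
  from E_space_sep[OF Ysub E] obtain G :: "nat \<times> nat \<times> nat \<Rightarrow> 'a set set" where G:
    "(\<forall>i. \<forall>W\<in>G i. openin (subtopology X Y) W) \<and> (\<forall>i. strongly_point_finite (G i)) \<and>
    (\<forall>x y. x \<in> Y \<longrightarrow> y \<in> Y \<longrightarrow> x \<noteq> y \<longrightarrow> (\<exists>i. \<exists>W\<in>G i.
          (x \<in> W \<and> y \<notin> subtopology X Y closure_of W) \<or> (y \<in> W \<and> x \<notin> subtopology X Y closure_of W)))"
    by (rule exE)
  have G1: "\<forall>i. \<forall>W\<in>G i. openin (subtopology X Y) W" using G by (rule conjunct1)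
  have G2: "\<forall>i. strongly_point_finite (G i)" using G by (rule conjunct1[OF conjunct2])
  have G3: "\<forall>x y. x \<in> Y \<longrightarrow> y \<in> Y \<longrightarrow> x \<noteq> y \<longrightarrow> (\<exists>i. \<exists>W\<in>G i.
          (x \<in> W \<and> y \<notin> subtopology X Y closure_of W) \<or> (y \<in> W \<and> x \<notin> subtopology X Y closure_of W))"
    using G by (rule conjunct2[OF conjunct2])
  show "F_aleph0_embedded X Y"
  proof (rule extend_lemma[OF Ysub pre, of G])
    show "openin (subtopology X Y) W" if "W \<in> G i" for i W using G1 that by blast
    show "strongly_point_finite (G i)" for i using G2 by blast
    show "\<exists>i. \<exists>W\<in>G i. (x \<in> W \<and> y \<notin> subtopology X Y closure_of W) \<or> (y \<in> W \<and> x \<notin> subtopology X Y closure_of W)"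
      if "x \<in> Y" "y \<in> Y" "x \<noteq> y" for x y
      using G3 that by (simp only: simp_thms)
  qed
next
  fix D
  assume h: "D \<subseteq> topspace X \<and> X closure_of D = topspace X \<and> metrizable_space (subtopology X D)"
  then have Dsub: "D \<subseteq> topspace X" and dense: "X closure_of D = topspace X"
    and met: "metrizable_space (subtopology X D)" by blast+
  have pre: "D \<subseteq> X interior_of (X closure_of D)" unfolding dense interior_of_topspace by (rule Dsub)
  have "\<exists>M d. Metric_space M d \<and> subtopology X D = Metric_space.mtopology M d"
    using met unfolding metrizable_space_def .
  then obtain M d where Md: "Metric_space M d" and eq: "subtopology X D = Metric_space.mtopology M d"
    by (elim exE conjE)
  interpret m: Metric_space M d by (rule Md)
  have MD: "M = D"
  proof -
    have "topspace (subtopology X D) = D" using Dsub by auto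
    then show ?thesis using eq by simp
  qed
  from m.metric_sep obtain G :: "rat \<Rightarrow> 'a set set" where G:
    "(\<forall>q. \<forall>W\<in>G q. openin m.mtopology W) \<and> (\<forall>q. strongly_point_finite (G q))
     \<and> (\<forall>x y. x \<in> M \<longrightarrow> y \<in> M \<longrightarrow> x \<noteq> y \<longrightarrow> (\<exists>q. \<exists>W\<in>G q. x \<in> W \<and> y \<notin> m.mtopology closure_of W))"
    by (rule exE)
  have G1: "\<forall>q. \<forall>W\<in>G q. openin m.mtopology W" using G by (rule conjunct1)
  have G2: "\<forall>q. strongly_point_finite (G q)" using G by (rule conjunct1[OF conjunct2])
  have G3: "\<forall>x y. x \<in> M \<longrightarrow> y \<in> M \<longrightarrow> x \<noteq> y \<longrightarrow> (\<exists>q. \<exists>W\<in>G q. x \<in> W \<and> y \<notin> m.mtopology closure_of W)"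
    using G by (rule conjunct2[OF conjunct2])
  show "F_aleph0_embedded X D"
  proof (rule extend_lemma[OF Dsub pre, of G])
    show "openin (subtopology X D) W" if "W \<in> G i" for i W
      unfolding eq using G1 that by blast
    show "strongly_point_finite (G i)" for i using G2 by blast
    fix x y assume xy: "x \<in> D" "y \<in> D" "x \<noteq> y"
    then have "\<exists>q. \<exists>W\<in>G q. x \<in> W \<and> y \<notin> m.mtopology closure_of W" using G3 MD by blast
    then obtain q W where "W \<in> G q" "x \<in> W" "y \<notin> m.mtopology closure_of W" by blast
    then show "\<exists>i. \<exists>W\<in>G i. (x \<in> W \<and> y \<notin> subtopology X D closure_of W) \<or> (y \<in> W \<and> x \<notin> subtopology X D closure_of W)"
      unfolding eq by blast
  qed
qed

end
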